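(* Let $\Sigma=\{a_1,a_2,c\}$. For $k<m$ in $\mathbb{N}$ let $L_{k,m}$ be the set of trees obtained from $t_c$ by grafting some tree $t'\in L_{\neg a_1\vee\neg a_2}$ on node $l^k r$ and grafting $t_{a_1}$ on node $l^m$; let $L_m:=\bigcup_{k<m}L_{k,m}$ and $L^{fa}:=\bigcup_{m\in\mathbb{N}}L_m$. Then there is a finitely ambiguous parity tree automaton that accepts $L^{fa}$.
   Context: Trees over $\Sigma$ are functions $t:\{l,r\}^*\to\Sigma$; $t_\sigma$ is the tree with all nodes labeled $\sigma$; grafting $t_2$ on node $v$ in $t_1$ replaces the subtree of $t_1$ rooted at $v$ by $t_2$. $L_{\neg a_1\vee\neg a_2}$ is the set of trees over $\Sigma$ with no $a_1$-labeled node or with no $a_2$-labeled node. A parity tree automaton (PTA) $\mathcal{A}=(Q,\Sigma,Q_I,\delta,\mathbb{C})$ ($Q$ finite, $Q_I\subseteq Q$, $\delta\subseteq Q\times\Sigma\times Q\times Q$, $\mathbb{C}:Q\to\mathbb{N}$) has computations $\phi:\{l,r\}^*\to Q$ with $\phi(\epsilon)\in Q_I$, $(\phi(v),t(v),\phi(vl),\phi(vr))\in\delta$, accepting if on every branch the largest color seen infinitely often is even. It is finitely ambiguous if on every tree it has finitely many accepting computations. *)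

theory Defs
  imports Main
begin

datatype dir = Lft | Rgt

type_synonym node = "dir list"
type_synonym 'a tree = "node \<Rightarrow> 'a"

datatype sym = A1 | A2 | C

definition const_tree :: "'a \<Rightarrow> 'a tree" where
  "const_tree \<sigma> = (\<lambda>_. \<sigma>)"

definition graft :: "'a tree \<Rightarrow> node \<Rightarrow> 'a tree \<Rightarrow> 'a tree" where
  "graft t1 v t2 = (\<lambda>w. if take (length v) w = v then t2 (drop (length v) w) else t1 w)"

definition L_not_a1_or_not_a2 :: "sym tree set" where
  "L_not_a1_or_not_a2 = {t. (\<forall>v. t v \<noteq> A1) \<or> (\<forall>v. t v \<noteq> A2)}"

definition L_km :: "nat \<Rightarrow> nat \<Rightarrow> sym tree set" where
  "L_km k m = {graft (graft (const_tree C) (replicate k Lft @ [Rgt]) t') (replicate m Lft) (const_tree A1)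
               | t'. t' \<in> L_not_a1_or_not_a2}"

definition L_m :: "nat \<Rightarrow> sym tree set" where
  "L_m m = (\<Union>k\<in>{k. k < m}. L_km k m)"

definition L_fa :: "sym tree set" where
  "L_fa = (\<Union>m. L_m m)"

record ('q, 'a) pta =
  states :: "'q set"
  initial :: "'q set"
  trans :: "('q \<times> 'a \<times> 'q \<times> 'q) set"
  colour :: "'q \<Rightarrow> nat"

definition wf_pta :: "('q, 'a) pta \<Rightarrow> bool" where
  "wf_pta A \<longleftrightarrow> finite (states A) \<and> initial A \<subseteq> states A \<and>
     trans A \<subseteq> states A \<times> UNIV \<times> states A \<times> states A"

definition computation :: "('q, 'a) pta \<Rightarrow> 'a tree \<Rightarrow> (node \<Rightarrow> 'q) \<Rightarrow> bool" where
  "computation A t \<phi> \<longleftrightarrow> \<phi> [] \<in> initial A \<and>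
     (\<forall>v. (\<phi> v, t v, \<phi> (v @ [Lft]), \<phi> (v @ [Rgt])) \<in> trans A)"

definition branch_node :: "(nat \<Rightarrow> dir) \<Rightarrow> nat \<Rightarrow> node" where
  "branch_node b n = map b [0..<n]"

definition parity_ok :: "('q, 'a) pta \<Rightarrow> (node \<Rightarrow> 'q) \<Rightarrow> (nat \<Rightarrow> dir) \<Rightarrow> bool" where
  "parity_ok A \<phi> b \<longleftrightarrow>
     (\<exists>c. even c \<and> infinite {n. colour A (\<phi> (branch_node b n)) = c} \<and>
          (\<forall>c'. infinite {n. colour A (\<phi> (branch_node b n)) = c'} \<longrightarrow> c' \<le> c))"

definition accepting :: "('q, 'a) pta \<Rightarrow> 'a tree \<Rightarrow> (node \<Rightarrow> 'q) \<Rightarrow> bool" where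
  "accepting A t \<phi> \<longleftrightarrow> computation A t \<phi> \<and> (\<forall>b. parity_ok A \<phi> b)"

definition lang :: "('q, 'a) pta \<Rightarrow> 'a tree set" where
  "lang A = {t. \<exists>\<phi>. accepting A t \<phi>}"

definition finitely_ambiguous :: "('q, 'a) pta \<Rightarrow> bool" where
  "finitely_ambiguous A \<longleftrightarrow> (\<forall>t. finite {\<phi>. accepting A t \<phi>})"

end

theory Submission
  imports Defs
begin

definition tr :: "(nat \<times> sym \<times> nat \<times> nat) set" where
  "tr = {(0,C,0,2),(0,C,1,4),(0,C,1,5),(1,C,1,2),(1,A1,3,3),(2,C,2,2),(3,A1,3,3),
         (4,A2,4,4),(4,C,4,4),(5,A1,5,5),(5,C,5,5)}"

definition Aut :: "(nat, sym) pta" where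
  "Aut = \<lparr>states = {0..5}, initial = {0}, trans = tr, colour = (\<lambda>q. if q \<le> 1 then 1 else 0)\<rparr>"

lemma Aut_simps[simp]: "states Aut = {0..5}" "initial Aut = {0}" "trans Aut = tr"
  "colour Aut = (\<lambda>q. if q \<le> 1 then 1 else 0)"
  by (simp_all add: Aut_def)

lemma tr_uni: "(q,a,x,y) \<in> tr \<Longrightarrow> 2 \<le> q \<Longrightarrow> x = q \<and> y = q"
  by (auto simp: tr_def)

lemma unif:
  assumes "\<forall>v. (\<phi> v, t v, \<phi> (v@[Lft]), \<phi> (v@[Rgt])) \<in> tr" "\<phi> u = q" "2 \<le> q"
  shows "\<phi> (u@w) = q"
proof (induction w rule: rev_induct)
  case Nil then show ?case using assms by simp
next
  case (snoc d w)
  have "(\<phi> (u@w), t (u@w), \<phi> (u@w@[Lft]), \<phi> (u@w@[Rgt])) \<in> tr"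
    using assms(1) by (metis append_assoc)
  then have "\<phi> (u@w@[Lft]) = q \<and> \<phi> (u@w@[Rgt]) = q" using tr_uni snoc assms(3) by auto
  then show ?case by (cases d) auto
qed

lemma decomp: "(\<exists>i. v = replicate i Lft) \<or> (\<exists>i w. v = replicate i Lft @ Rgt # w)"
proof (induction v)
  case Nil show ?case by (rule disjI1, rule exI[of _ 0], simp)
next
  case (Cons d v) show ?case
  proof (cases d)
    case Lft with Cons.IH show ?thesis by (metis append_Cons replicate_Suc)
  next
    case Rgt then show ?thesis by (metis append_Nil replicate_0)
  qed
qed

lemma rep_snoc: "replicate i Lft @ [Lft] = replicate (Suc i) Lft"
  by (simp add: replicate_append_same)

lemma parity_iff: "parity_ok Aut \<phi> b \<longleftrightarrow> finite {n. \<phi> (branch_node b n) \<le> 1}"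
proof -
  define S where "S = {n. \<phi> (branch_node b n) \<le> 1}"
  have c1: "{n. colour Aut (\<phi> (branch_node b n)) = 1} = S" by (auto simp: S_def)
  have c0: "{n. colour Aut (\<phi> (branch_node b n)) = 0} = - S" by (auto simp: S_def)
  have cx: "\<And>c. c \<ge> 2 \<Longrightarrow> {n. colour Aut (\<phi> (branch_node b n)) = c} = {}" by auto
  show ?thesis unfolding S_def[symmetric]
  proof
    assume "parity_ok Aut \<phi> b"
    then obtain c where c: "even c" "infinite {n. colour Aut (\<phi> (branch_node b n)) = c}"
      "\<forall>c'. infinite {n. colour Aut (\<phi> (branch_node b n)) = c'} \<longrightarrow> c' \<le> c"
      unfolding parity_ok_def by blast
    show "finite S"
    proof (rule ccontr)
      assume "infinite S"
      then have "1 \<le> c" using c(3) c1 by auto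
      with c(1) have "c \<ge> 2" by presburger
      then show False using cx c(2) by simp
    qed
  next
    assume fS: "finite S"
    have "infinite (- S)" using fS by (simp add: Compl_eq_Diff_UNIV Diff_infinite_finite)
    moreover have "\<forall>c'. infinite {n. colour Aut (\<phi> (branch_node b n)) = c'} \<longrightarrow> c' \<le> 0"
    proof (intro allI impI)
      fix c' assume h: "infinite {n. colour Aut (\<phi> (branch_node b n)) = c'}"
      show "c' \<le> 0"
      proof (rule ccontr)
        assume "\<not> c' \<le> 0"
        then have "c' = 1 \<or> c' \<ge> 2" by auto
        then show False using h c1 cx fS by auto
      qed
    qed
    ultimately show "parity_ok Aut \<phi> b" unfolding parity_ok_def using c0
      by (intro exI[of _ 0]) auto
  qed
qed

lemma bn_len: "length (branch_node b n) = n" by (simp add: branch_node_def)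
lemma bn_Lft: "branch_node (\<lambda>_. Lft) n = replicate n Lft"
  by (simp add: branch_node_def map_replicate_const)

definition Phi :: "nat \<Rightarrow> nat \<Rightarrow> nat \<Rightarrow> node \<Rightarrow> nat" where
  "Phi m k g v = (let i = length (takeWhile (\<lambda>d. d = Lft) v) in
     if i = length v then (if i \<le> k then 0 else if i \<le> m then 1 else 3)
     else (if m \<le> i then 3 else if i = k then g else 2))"

lemma Phi_sp: "Phi m k g (replicate i Lft) = (if i \<le> k then 0 else if i \<le> m then 1 else 3)"
  by (simp add: Phi_def takeWhile_eq_all_conv)

lemma Phi_br: "Phi m k g (replicate i Lft @ Rgt # w) = (if m \<le> i then 3 else if i = k then g else 2)"
  by (simp add: Phi_def takeWhile_append)

definition Gt :: "nat \<Rightarrow> nat \<Rightarrow> sym tree \<Rightarrow> sym tree" where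
  "Gt k m t' = graft (graft (const_tree C) (replicate k Lft @ [Rgt]) t') (replicate m Lft) (const_tree A1)"

lemma graft_in: "graft t1 v t2 (v @ u) = t2 u" by (simp add: graft_def)
lemma graft_out: "\<not> (\<exists>u. x = v @ u) \<Longrightarrow> graft t1 v t2 x = t1 x"
  unfolding graft_def by (metis append_take_drop_id)

lemma rep_ne: "replicate i Lft @ Rgt # w = replicate j Lft @ u \<Longrightarrow> i < j \<Longrightarrow> False"
proof -
  assume h: "replicate i Lft @ Rgt # w = replicate j Lft @ u" "i < j"
  then have "(replicate i Lft @ Rgt # w) ! i = (replicate j Lft @ u) ! i" by simp
  then show False using h(2) by (simp add: nth_append)
qed

lemma rep_eq: "replicate i Lft @ Rgt # w = replicate k Lft @ Rgt # w' \<Longrightarrow> i = k \<and> w = w'"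
proof -
  assume h: "replicate i Lft @ Rgt # w = replicate k Lft @ Rgt # w'"
  have "\<not> i < k" using rep_ne[of i w k "Rgt # w'"] h by auto
  moreover have "\<not> k < i" using rep_ne[of k w' i "Rgt # w"] h by auto
  ultimately show ?thesis using h by auto
qed

lemma G_sp: "Gt k m t' (replicate i Lft) = (if i < m then C else A1)"
proof (cases "i < m")
  case True
  have "\<not> (\<exists>u. replicate i Lft = replicate m Lft @ u)"
    using True by (metis length_append length_replicate not_add_less1)
  moreover have "\<not> (\<exists>u. replicate i Lft = (replicate k Lft @ [Rgt]) @ u)"
    by (metis Un_iff dir.distinct(1) in_set_replicate list.set_intros(1) set_append)
  ultimately show ?thesis using True by (simp add: Gt_def graft_out const_tree_def)
next
  case False
  then have "replicate i Lft = replicate m Lft @ replicate (i - m) Lft"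
    by (metis le_add_diff_inverse not_less replicate_add)
  then show ?thesis using False by (simp add: Gt_def graft_in const_tree_def)
qed

lemma G_br: "Gt k m t' (replicate i Lft @ Rgt # w) = (if m \<le> i then A1 else if i = k then t' w else C)"
proof (cases "m \<le> i")
  case False
  have n1: "\<not> (\<exists>u. replicate i Lft @ Rgt # w = replicate m Lft @ u)"
    using False rep_ne by (metis not_le)
  show ?thesis
  proof (cases "i = k")
    case True
    have "graft (const_tree C) (replicate k Lft @ [Rgt]) t' ((replicate k Lft @ [Rgt]) @ w) = t' w"
      by (rule graft_in)
    then show ?thesis using False n1 True by (simp add: Gt_def graft_out)
  next
    case F: False
    have "\<not> (\<exists>u. replicate i Lft @ Rgt # w = (replicate k Lft @ [Rgt]) @ u)"
    proof
      assume "\<exists>u. replicate i Lft @ Rgt # w = (replicate k Lft @ [Rgt]) @ u"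
      then obtain u where "replicate i Lft @ Rgt # w = replicate k Lft @ Rgt # u" by auto
      then show False using rep_eq F by blast
    qed
    then show ?thesis using False n1 F by (simp add: Gt_def graft_out const_tree_def)
  qed
next
  case True
  then have "replicate i Lft @ Rgt # w = replicate m Lft @ (replicate (i - m) Lft @ Rgt # w)"
    by (metis append_assoc le_add_diff_inverse replicate_add)
  then show ?thesis using True by (simp add: Gt_def graft_in const_tree_def)
qed


lemma Phi_le1: "Phi m k g v \<le> 1 \<Longrightarrow> g \<ge> 2 \<Longrightarrow> k < m \<Longrightarrow> length v \<le> m"
  using decomp[of v] by (auto simp: Phi_sp Phi_br split: if_splits)

lemma construct:
  assumes "k < m" "t' \<in> L_not_a1_or_not_a2"
  shows "\<exists>g. accepting Aut (Gt k m t') (Phi m k g)"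
proof -
  obtain g :: nat where g: "g = 4 \<and> (\<forall>w. t' w \<noteq> A1) \<or> g = 5 \<and> (\<forall>w. t' w \<noteq> A2)"
    using assms(2) unfolding L_not_a1_or_not_a2_def by auto
  have g2: "g \<ge> 2" using g by auto
  have "\<forall>v. (Phi m k g v, Gt k m t' v, Phi m k g (v@[Lft]), Phi m k g (v@[Rgt])) \<in> tr"
  proof
    fix v
    show "(Phi m k g v, Gt k m t' v, Phi m k g (v@[Lft]), Phi m k g (v@[Rgt])) \<in> tr"
    proof (cases "\<exists>i. v = replicate i Lft")
      case True
      then obtain i where v: "v = replicate i Lft" by auto
      have "v @ [Rgt] = replicate i Lft @ Rgt # []" using v by simp
      then have e: "Phi m k g (v@[Rgt]) = (if m \<le> i then 3 else if i = k then g else 2)"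
        using Phi_br by simp
      have e2: "Phi m k g (v@[Lft]) = (if Suc i \<le> k then 0 else if Suc i \<le> m then 1 else 3)"
        using v rep_snoc Phi_sp by metis
      show ?thesis unfolding e e2 using v assms(1) g
        by (auto simp: Phi_sp G_sp tr_def)
    next
      case False
      then obtain i w where v: "v = replicate i Lft @ Rgt # w" using decomp by blast
      have vd: "\<And>d. v @ [d] = replicate i Lft @ Rgt # (w @ [d])" using v by simp
      have ph: "\<And>u. Phi m k g (replicate i Lft @ Rgt # u) = (if m \<le> i then 3 else if i = k then g else 2)"
        by (rule Phi_br)
      have gt: "Gt k m t' v = (if m \<le> i then A1 else if i = k then t' w else C)"
        using v G_br by simp
      show ?thesis
      proof (cases "m \<le> i")
        case True then show ?thesis unfolding vd v ph gt[unfolded v] by (simp add: tr_def ph)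
      next
        case F: False
        show ?thesis
        proof (cases "i = k")
          case True
          have lab: "g = 4 \<and> (t' w = A2 \<or> t' w = C) \<or> g = 5 \<and> (t' w = A1 \<or> t' w = C)"
            using g by (cases "t' w") auto
          have "(g, t' w, g, g) \<in> tr" using lab unfolding tr_def by auto
          then show ?thesis using F True unfolding vd v ph gt[unfolded v] by (simp add: Phi_br)
        next
          case False then show ?thesis using F unfolding vd v ph gt[unfolded v] by (simp add: tr_def ph)
        qed
      qed
    qed
  qed
  moreover have "Phi m k g [] = 0" using Phi_sp[of m k g 0] by simp
  moreover have "\<forall>b. parity_ok Aut (Phi m k g) b"
  proof
    fix b
    have "{n. Phi m k g (branch_node b n) \<le> 1} \<subseteq> {..m}"
      using Phi_le1[OF _ g2 assms(1)] bn_len by fastforce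
    then show "parity_ok Aut (Phi m k g) b" by (simp add: parity_iff finite_subset)
  qed
  ultimately show ?thesis unfolding accepting_def computation_def by auto
qed


lemma analyze:
  assumes acc: "accepting Aut t \<phi>"
  shows "\<exists>m k g. k < m \<and> (g = 4 \<or> g = 5) \<and> \<phi> = Phi m k g"
proof -
  have comp: "\<forall>v. (\<phi> v, t v, \<phi> (v@[Lft]), \<phi> (v@[Rgt])) \<in> tr" and root: "\<phi> [] = 0"
    using acc unfolding accepting_def computation_def by simp_all
  have sp: "\<And>n. (\<phi> (replicate n Lft), t (replicate n Lft), \<phi> (replicate (Suc n) Lft),
      \<phi> (replicate n Lft @ [Rgt])) \<in> tr"
  proof -
    fix n
    show "?thesis n" using comp[rule_format, of "replicate n Lft"] rep_snoc[of n] by simp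
  qed
  have "\<exists>n. 1 < \<phi> (replicate n Lft)"
  proof (rule ccontr)
    assume "\<not> ?thesis"
    then have "{n. \<phi> (branch_node (\<lambda>_. Lft) n) \<le> 1} = UNIV" by (auto simp: bn_Lft not_less)
    moreover have "parity_ok Aut \<phi> (\<lambda>_. Lft)" using acc unfolding accepting_def by auto
    ultimately show False by (simp add: parity_iff)
  qed
  define m' where "m' = (LEAST n. 1 < \<phi> (replicate n Lft))"
  have m'1: "1 < \<phi> (replicate m' Lft)" unfolding m'_def
    using \<open>\<exists>n. 1 < \<phi> (replicate n Lft)\<close> by (rule LeastI_ex)
  have m'2: "\<And>i. i < m' \<Longrightarrow> \<phi> (replicate i Lft) \<le> 1"
  proof -
    fix i assume "i < m'"
    then have "\<not> 1 < \<phi> (replicate i Lft)" unfolding m'_def by (rule not_less_Least)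
    then show "\<phi> (replicate i Lft) \<le> 1" by simp
  qed
  have "m' \<noteq> 0" using m'1 root by (cases m') auto
  then obtain m where mm: "m' = Suc m" by (cases m') auto
  have low: "\<And>i. i \<le> m \<Longrightarrow> \<phi> (replicate i Lft) \<le> 1" using m'2 mm by auto
  have atm: "\<phi> (replicate m Lft) = 1 \<and> \<phi> (replicate (Suc m) Lft) = 3 \<and> \<phi> (replicate m Lft @ [Rgt]) = 3"
    using sp[of m] low[of m] m'1 mm by (auto simp: tr_def)
  have ex1: "\<exists>j. \<phi> (replicate j Lft) = 1" using atm by blast
  define k' where "k' = (LEAST j. \<phi> (replicate j Lft) = 1)"
  have k'1: "\<phi> (replicate k' Lft) = 1" unfolding k'_def using ex1 by (rule LeastI_ex)
  have k'2: "\<And>i. i < k' \<Longrightarrow> \<phi> (replicate i Lft) \<noteq> 1"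
    unfolding k'_def by (rule not_less_Least)
  have k'm: "k' \<le> m" unfolding k'_def using atm by (intro Least_le) simp
  have "k' \<noteq> 0" using k'1 root by (cases k') auto
  then obtain k where kk: "k' = Suc k" by (cases k') auto
  have km: "k < m" using k'm kk by simp
  have zero: "\<And>i. i \<le> k \<Longrightarrow> \<phi> (replicate i Lft) = 0"
  proof -
    fix i assume "i \<le> k"
    then have "\<phi> (replicate i Lft) \<noteq> 1" "\<phi> (replicate i Lft) \<le> 1" using k'2 kk low km by auto
    then show "\<phi> (replicate i Lft) = 0" by simp
  qed
  have one: "\<And>i. Suc k \<le> i \<Longrightarrow> i \<le> m \<Longrightarrow> \<phi> (replicate i Lft) = 1"
  proof -
    fix i assume h: "Suc k \<le> i" "i \<le> m"
    have "i \<le> m \<longrightarrow> \<phi> (replicate i Lft) = 1"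
      using h(1)
    proof (induction i rule: dec_induct)
      case base then show ?case using k'1 kk by simp
    next
      case (step n)
      show ?case
      proof
        assume "Suc n \<le> m"
        then have a: "\<phi> (replicate n Lft) = 1" using step by auto
        have b: "\<phi> (replicate (Suc n) Lft) \<le> 1" by (rule low) fact
        from a b have "\<phi> (replicate n Lft) = 1" "\<phi> (replicate (Suc n) Lft) \<le> 1" .
        then show "\<phi> (replicate (Suc n) Lft) = 1" using sp[of n] by (auto simp: tr_def)
      qed
    qed
    then show "\<phi> (replicate i Lft) = 1" using h by simp
  qed
  obtain g where g: "\<phi> (replicate k Lft @ [Rgt]) = g" "g = 4 \<or> g = 5"
    using sp[of k] zero[of k] one[of "Suc k"] km by (auto simp: tr_def)
  have r2a: "\<And>i. i < k \<Longrightarrow> \<phi> (replicate i Lft @ [Rgt]) = 2"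
  proof -
    fix i assume "i < k"
    then show "\<phi> (replicate i Lft @ [Rgt]) = 2"
      using sp[of i] zero[of i] zero[of "Suc i"] by (auto simp: tr_def)
  qed
  have r2b: "\<And>i. k < i \<Longrightarrow> i < m \<Longrightarrow> \<phi> (replicate i Lft @ [Rgt]) = 2"
  proof -
    fix i assume "k < i" "i < m"
    then show "\<phi> (replicate i Lft @ [Rgt]) = 2"
      using sp[of i] one[of i] one[of "Suc i"] by (auto simp: tr_def)
  qed
  have "\<phi> = Phi m k g"
  proof
    fix v
    show "\<phi> v = Phi m k g v"
    proof (cases "\<exists>i. v = replicate i Lft")
      case True
      then obtain i where v: "v = replicate i Lft" by auto
      show ?thesis
      proof (cases "m < i")
        case True
        then have "replicate i Lft = replicate (Suc m) Lft @ replicate (i - Suc m) Lft"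
          by (metis Suc_leI le_add_diff_inverse replicate_add)
        then have "\<phi> v = 3" using v unif[OF comp, of "replicate (Suc m) Lft" 3] atm by simp
        then show ?thesis using v True Phi_sp km by simp
      next
        case False
        then show ?thesis using v zero one Phi_sp[of m k g i] by auto
      qed
    next
      case False
      then obtain i w where v: "v = replicate i Lft @ Rgt # w" using decomp by blast
      have vv: "v = (replicate i Lft @ [Rgt]) @ w" using v by simp
      show ?thesis
      proof (cases "m < i")
        case True
        then have "v = replicate (Suc m) Lft @ (replicate (i - Suc m) Lft @ Rgt # w)"
          using v by (metis Suc_leI append_assoc le_add_diff_inverse replicate_add)
        then have "\<phi> v = 3" using unif[OF comp, of "replicate (Suc m) Lft" 3] atm by simp
        then show ?thesis using v True Phi_br by simp
      next
        case False
        then consider "i = m" | "i = k" | "i < k" | "k < i \<and> i < m" using km by linarith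
        then show ?thesis
        proof cases
          case 1 then show ?thesis using vv unif[OF comp, of "replicate m Lft @ [Rgt]" 3] atm v Phi_br
            by simp
        next
          case 2 then show ?thesis using vv unif[OF comp, of "replicate k Lft @ [Rgt]" g] g v Phi_br km
            by auto
        next
          case 3 then show ?thesis using vv unif[OF comp, of "replicate i Lft @ [Rgt]" 2] r2a v Phi_br km
            by auto
        next
          case 4 then show ?thesis using vv unif[OF comp, of "replicate i Lft @ [Rgt]" 2] r2b v Phi_br
            by auto
        qed
      qed
    qed
  qed
  then show ?thesis using km g by blast
qed


lemma labels:
  assumes "computation Aut t (Phi m k g)" "k < m" "g = 4 \<or> g = 5"
  shows "\<And>i. t (replicate i Lft) = (if i < m then C else A1)"
    and "\<And>i w. \<not> (i = k \<and> i < m) \<Longrightarrow> t (replicate i Lft @ Rgt # w) = (if m \<le> i then A1 else C)"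
    and "(\<lambda>w. t (replicate k Lft @ Rgt # w)) \<in> L_not_a1_or_not_a2"
proof -
  have comp: "\<forall>v. (Phi m k g v, t v, Phi m k g (v@[Lft]), Phi m k g (v@[Rgt])) \<in> tr"
    using assms(1) unfolding computation_def by simp
  have br: "\<And>i w. (if m \<le> i then 3 else if i = k then g else 2, t (replicate i Lft @ Rgt # w),
      if m \<le> i then 3 else if i = k then g else 2, if m \<le> i then 3 else if i = k then g else 2) \<in> tr"
  proof -
    fix i w
    have "(Phi m k g (replicate i Lft @ Rgt # w), t (replicate i Lft @ Rgt # w),
       Phi m k g (replicate i Lft @ Rgt # (w @ [Lft])), Phi m k g (replicate i Lft @ Rgt # (w@[Rgt]))) \<in> tr"
      using comp[rule_format, of "replicate i Lft @ Rgt # w"] by simp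
    then show "?thesis i w" unfolding Phi_br .
  qed
  show "\<And>i w. \<not> (i = k \<and> i < m) \<Longrightarrow> t (replicate i Lft @ Rgt # w) = (if m \<le> i then A1 else C)"
  proof -
    fix i w
    assume "\<not> (i = k \<and> i < m)"
    then show "t (replicate i Lft @ Rgt # w) = (if m \<le> i then A1 else C)"
      using br[of i w] by (auto simp: tr_def split: if_splits)
  qed
  show "\<And>i. t (replicate i Lft) = (if i < m then C else A1)"
  proof -
    fix i
    have "(Phi m k g (replicate i Lft), t (replicate i Lft), Phi m k g (replicate (Suc i) Lft),
       Phi m k g (replicate i Lft @ Rgt # [])) \<in> tr"
      using comp[rule_format, of "replicate i Lft"] rep_snoc[of i] by simp
    then have "(if i \<le> k then 0 else if i \<le> m then 1 else 3, t (replicate i Lft),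
        if Suc i \<le> k then 0 else if Suc i \<le> m then 1 else 3,
        if m \<le> i then 3 else if i = k then g else 2) \<in> tr"
      unfolding Phi_sp Phi_br .
    then show "?thesis i" using assms(2,3) by (auto simp: tr_def split: if_splits)
  qed
  show "(\<lambda>w. t (replicate k Lft @ Rgt # w)) \<in> L_not_a1_or_not_a2"
  proof (cases "g = 4")
    case True
    then have "\<forall>w. t (replicate k Lft @ Rgt # w) \<noteq> A1"
    proof (intro allI)
      fix w show "t (replicate k Lft @ Rgt # w) \<noteq> A1" using br[of k w] assms(2) \<open>g = 4\<close> by (auto simp: tr_def)
    qed
    then show ?thesis unfolding L_not_a1_or_not_a2_def by simp
  next
    case False
    then have "g = 5" using assms(3) by simp
    then have "\<forall>w. t (replicate k Lft @ Rgt # w) \<noteq> A2"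
    proof (intro allI)
      fix w show "t (replicate k Lft @ Rgt # w) \<noteq> A2" using br[of k w] assms(2) \<open>g = 5\<close> by (auto simp: tr_def)
    qed
    then show ?thesis unfolding L_not_a1_or_not_a2_def by simp
  qed
qed

lemma t_eq_Gt:
  assumes "computation Aut t (Phi m k g)" "k < m" "g = 4 \<or> g = 5"
  shows "t = Gt k m (\<lambda>w. t (replicate k Lft @ Rgt # w))"
proof
  fix v
  show "t v = Gt k m (\<lambda>w. t (replicate k Lft @ Rgt # w)) v"
  proof (cases "\<exists>i. v = replicate i Lft")
    case True
    then obtain i where "v = replicate i Lft" by auto
    then show ?thesis using labels(1)[OF assms] G_sp by simp
  next
    case False
    then obtain i w where v: "v = replicate i Lft @ Rgt # w" using decomp by blast
    show ?thesis
    proof (cases "i = k \<and> i < m")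
      case True then show ?thesis using v G_br by simp
    next
      case False then show ?thesis using v labels(2)[OF assms False] G_br[of k m _ i w] False by auto
    qed
  qed
qed

theorem lemma6p3:
  shows "\<exists>A :: (nat, sym) pta. wf_pta A \<and> finitely_ambiguous A \<and> lang A = L_fa"
proof (intro exI conjI)
  show "wf_pta Aut" unfolding wf_pta_def by (auto simp: tr_def)
  show "lang Aut = L_fa"
  proof
    show "lang Aut \<subseteq> L_fa"
    proof
      fix t assume "t \<in> lang Aut"
      then obtain \<phi> where acc: "accepting Aut t \<phi>" unfolding lang_def by auto
      then obtain m k g where mk: "k < m" "g = 4 \<or> g = 5" "\<phi> = Phi m k g" using analyze by blast
      then have c: "computation Aut t (Phi m k g)" using acc unfolding accepting_def by simp
      have "t \<in> L_km k m" unfolding L_km_def using t_eq_Gt[OF c mk(1,2)] labels(3)[OF c mk(1,2)]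
        unfolding Gt_def by blast
      then show "t \<in> L_fa" unfolding L_fa_def L_m_def using mk(1) by blast
    qed
  next
    show "L_fa \<subseteq> lang Aut"
    proof
      fix t assume "t \<in> L_fa"
      then obtain m k t' where "k < m" "t' \<in> L_not_a1_or_not_a2" "t = Gt k m t'"
        unfolding L_fa_def L_m_def L_km_def Gt_def by blast
      then show "t \<in> lang Aut" unfolding lang_def using construct by blast
    qed
  qed
  show "finitely_ambiguous Aut" unfolding finitely_ambiguous_def
  proof
    fix t
    define M where "M = (LEAST i. t (replicate i Lft) = A1)"
    have "{\<phi>. accepting Aut t \<phi>} \<subseteq> (\<lambda>(k, g). Phi M k g) ` ({..<M} \<times> {4, 5})"
    proof
      fix \<phi> assume "\<phi> \<in> {\<phi>. accepting Aut t \<phi>}"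
      then have acc: "accepting Aut t \<phi>" by simp
      then obtain m k g where mk: "k < m" "g = 4 \<or> g = 5" "\<phi> = Phi m k g" using analyze by blast
      then have c: "computation Aut t (Phi m k g)" using acc unfolding accepting_def by simp
      have lab: "\<And>i. t (replicate i Lft) = (if i < m then C else A1)" by (rule labels(1)[OF c mk(1,2)])
      have "M = m" unfolding M_def
      proof (rule Least_equality)
        show "t (replicate m Lft) = A1" using lab[of m] by simp
        fix y assume "t (replicate y Lft) = A1"
        then show "m \<le> y" using lab[of y] by (auto split: if_splits)
      qed
      then show "\<phi> \<in> (\<lambda>(k, g). Phi M k g) ` ({..<M} \<times> {4, 5})"
        using mk by (intro rev_image_eqI[of "(k, g)"]) auto
    qed
    then show "finite {\<phi>. accepting Aut t \<phi>}" by (rule finite_subset) simp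
  qed
qed

end
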